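(* Let $G$ be a finite simple graph of order $n$ with minimum degree $\delta=\delta(G)\geq 3$. Then $$\gamma_{st}(G)\leq n-2\left\lfloor\frac{2\rho_{o}(G)+\delta-3}{2}\right\rfloor,$$ and this bound is sharp (there exist graphs with $\delta\ge 3$ attaining equality).
   Context: For a vertex $v$, $N(v)$ denotes the open neighborhood of $v$ (the set of vertices adjacent to $v$). A signed total dominating function (STDF) of $G$ is a function $f:V(G)\to\{-1,1\}$ such that $f(N(v))=\sum_{u\in N(v)}f(u)\geq 1$ for every vertex $v$. The signed total domination number $\gamma_{st}(G)$ is the minimum of $f(V(G))=\sum_{v\in V(G)}f(v)$ over all STDFs $f$ of $G$. A set $B\subseteq V(G)$ is an open packing if $N(u)\cap N(v)=\emptyset$ for all distinct $u,v\in B$; the open packing number $\rho_o(G)$ is the maximum cardinality of an open packing in $G$. *)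

theory Defs
  imports Complex_Main
begin

definition simple_graph :: "'a set \<Rightarrow> ('a \<Rightarrow> 'a \<Rightarrow> bool) \<Rightarrow> bool" where
  "simple_graph V E \<longleftrightarrow> finite V \<and> (\<forall>u v. E u v \<longrightarrow> u \<in> V \<and> v \<in> V)
     \<and> (\<forall>u v. E u v \<longrightarrow> E v u) \<and> (\<forall>v. \<not> E v v)"

definition nbhd :: "'a set \<Rightarrow> ('a \<Rightarrow> 'a \<Rightarrow> bool) \<Rightarrow> 'a \<Rightarrow> 'a set" where
  "nbhd V E v = {u \<in> V. E v u}"

definition min_degree :: "'a set \<Rightarrow> ('a \<Rightarrow> 'a \<Rightarrow> bool) \<Rightarrow> nat" where
  "min_degree V E = Min ((\<lambda>v. card (nbhd V E v)) ` V)"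

definition is_stdf :: "'a set \<Rightarrow> ('a \<Rightarrow> 'a \<Rightarrow> bool) \<Rightarrow> ('a \<Rightarrow> int) \<Rightarrow> bool" where
  "is_stdf V E f \<longleftrightarrow> (\<forall>v\<in>V. f v \<in> {-1, 1}) \<and> (\<forall>v\<in>V. (\<Sum>u\<in>nbhd V E v. f u) \<ge> 1)"

definition gamma_st :: "'a set \<Rightarrow> ('a \<Rightarrow> 'a \<Rightarrow> bool) \<Rightarrow> int" where
  "gamma_st V E = Min {(\<Sum>v\<in>V. f v) | f. is_stdf V E f}"

definition open_packing :: "'a set \<Rightarrow> ('a \<Rightarrow> 'a \<Rightarrow> bool) \<Rightarrow> 'a set \<Rightarrow> bool" where
  "open_packing V E B \<longleftrightarrow> B \<subseteq> V \<and>
     (\<forall>u\<in>B. \<forall>v\<in>B. u \<noteq> v \<longrightarrow> nbhd V E u \<inter> nbhd V E v = {})"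

definition rho_o :: "'a set \<Rightarrow> ('a \<Rightarrow> 'a \<Rightarrow> bool) \<Rightarrow> nat" where
  "rho_o V E = Max {card B | B. open_packing V E B}"

end

theory Submission
  imports Defs
begin

lemma sum_sign:
  assumes "finite A"
  shows "(\<Sum>x\<in>A. (if x \<in> S then -1 else 1::int)) = int (card A) - 2 * int (card (A \<inter> S))"
proof -
  have "(\<Sum>x\<in>A. (if x \<in> S then -1 else 1::int)) = (\<Sum>x\<in>A \<inter> S. -1) + (\<Sum>x\<in>A - S. 1)"
    using assms by (simp add: sum.If_cases Diff_eq)
  also have "\<dots> = - int (card (A \<inter> S)) + int (card (A - S))" by simp
  also have "card (A - S) = card A - card (A \<inter> S)"
    using assms by (simp add: card_Diff_subset_Int)
  also have "card (A \<inter> S) \<le> card A" using assms by (simp add: card_mono)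
  ultimately show ?thesis by (simp add: of_nat_diff)
qed

lemma stdf_set_finite:
  assumes "finite V"
  shows "finite {(\<Sum>v\<in>V. f v) | f. is_stdf V E f}"
proof -
  have "{(\<Sum>v\<in>V. f v) | f. is_stdf V E f} \<subseteq> {- int (card V) .. int (card V)}"
  proof
    fix x assume "x \<in> {(\<Sum>v\<in>V. f v) | f. is_stdf V E f}"
    then obtain f where x: "x = (\<Sum>v\<in>V. f v)" and f: "is_stdf V E f" by blast
    have a: "\<forall>v\<in>V. \<bar>f v\<bar> \<le> 1" using f unfolding is_stdf_def by auto
    have "\<bar>x\<bar> \<le> (\<Sum>v\<in>V. \<bar>f v\<bar>)" using x sum_abs by blast
    also have "\<dots> \<le> (\<Sum>v\<in>V. 1)" using a by (intro sum_mono) auto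
    finally show "x \<in> {- int (card V) .. int (card V)}" by auto
  qed
  thus ?thesis by (rule finite_subset) simp
qed

lemma packing_set_finite:
  assumes "finite V"
  shows "finite {card B | B. open_packing V E B}"
proof -
  have "{card B | B. open_packing V E B} \<subseteq> {0..card V}"
    using assms by (auto simp: open_packing_def card_mono)
  thus ?thesis by (rule finite_subset) simp
qed

lemma packing_nb:
  assumes "simple_graph V E" "open_packing V E B" "v \<in> V"
  shows "card (nbhd V E v \<inter> B) \<le> 1"
proof -
  have "\<forall>u\<in>nbhd V E v \<inter> B. \<forall>w\<in>nbhd V E v \<inter> B. u = w"
  proof (intro ballI, rule ccontr)
    fix u w assume u: "u \<in> nbhd V E v \<inter> B" and w: "w \<in> nbhd V E v \<inter> B" and "u \<noteq> w"
    then have "nbhd V E u \<inter> nbhd V E w = {}" using assms(2) unfolding open_packing_def by auto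
    moreover have "v \<in> nbhd V E u" "v \<in> nbhd V E w"
      using u w assms(1,3) unfolding nbhd_def simple_graph_def by auto
    ultimately show False by auto
  qed
  moreover have "finite (nbhd V E v \<inter> B)" using assms(1) unfolding simple_graph_def nbhd_def by auto
  ultimately show ?thesis using card_le_Suc0_iff_eq by (metis One_nat_def)
qed


lemma upper:
  assumes G: "simple_graph V E" and ne: "V \<noteq> {}" and d3: "min_degree V E \<ge> 3"
  shows "gamma_st V E \<le> int (card V)
                 - 2 * \<lfloor>(2 * real (rho_o V E) + real (min_degree V E) - 3) / 2\<rfloor>"
proof -
  define \<delta> where "\<delta> = min_degree V E"
  define k where "k = (\<delta> - 3) div 2"
  have fin: "finite V" using G simple_graph_def by auto
  have degge: "card (nbhd V E v) \<ge> \<delta>" if "v \<in> V" for v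
    unfolding \<delta>_def min_degree_def using fin that by (intro Min_le) auto
  have finN: "finite (nbhd V E v)" for v using fin unfolding nbhd_def by auto
  have "{} \<in> {B. open_packing V E B}" by (simp add: open_packing_def)
  hence "rho_o V E \<in> {card B | B. open_packing V E B}"
    unfolding rho_o_def using packing_set_finite[OF fin, of E] by (intro Max_in) auto
  then obtain B where B: "open_packing V E B" "card B = rho_o V E" by auto
  have BV: "B \<subseteq> V" using B(1) unfolding open_packing_def by auto
  obtain v0 where v0: "v0 \<in> V" using ne by auto
  have "card (nbhd V E v0 - B) \<ge> card (nbhd V E v0) - 1"
  proof -
    have "card (nbhd V E v0) = card (nbhd V E v0 - B) + card (nbhd V E v0 \<inter> B)"
      using finN by (metis Int_commute card_Int_Diff add.commute)
    thus ?thesis using packing_nb[OF G B(1) v0] by linarith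
  qed
  moreover have "nbhd V E v0 - B \<subseteq> V - B" unfolding nbhd_def by auto
  hence "card (nbhd V E v0 - B) \<le> card (V - B)" using fin by (intro card_mono) auto
  ultimately have "k \<le> card (V - B)" using degge[OF v0] d3 unfolding k_def \<delta>_def[symmetric] by linarith
  then obtain C where C: "C \<subseteq> V - B" "card C = k" "finite C" by (rule obtain_subset_with_card_n)
  define f where "f = (\<lambda>x. if x \<in> B \<union> C then -1 else (1::int))"
  have "is_stdf V E f"
    unfolding is_stdf_def
  proof (intro conjI ballI)
    fix v assume v: "v \<in> V"
    show "f v \<in> {-1, 1}" by (simp add: f_def)
    have "card (nbhd V E v \<inter> (B \<union> C)) \<le> card (nbhd V E v \<inter> B) + card (nbhd V E v \<inter> C)"
      by (metis Int_Un_distrib card_Un_le)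
    also have "card (nbhd V E v \<inter> C) \<le> card C" using C by (intro card_mono) auto
    finally have "card (nbhd V E v \<inter> (B \<union> C)) \<le> 1 + k" using packing_nb[OF G B(1) v] C by linarith
    moreover have "card (nbhd V E v) \<ge> 2 * k + 3" using degge[OF v] d3 unfolding k_def \<delta>_def by linarith
    ultimately show "(\<Sum>u\<in>nbhd V E v. f u) \<ge> 1"
      unfolding f_def using sum_sign[OF finN[of v], of "B \<union> C"] by linarith
  qed
  hence "(\<Sum>v\<in>V. f v) \<in> {(\<Sum>v\<in>V. f v) | f. is_stdf V E f}" by blast
  hence "gamma_st V E \<le> (\<Sum>v\<in>V. f v)"
    unfolding gamma_st_def using stdf_set_finite[OF fin] by (intro Min_le) auto
  also have "(\<Sum>v\<in>V. f v) = int (card V) - 2 * int (card (V \<inter> (B \<union> C)))"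
    unfolding f_def by (rule sum_sign[OF fin])
  also have "V \<inter> (B \<union> C) = B \<union> C" using BV C by auto
  also have "card (B \<union> C) = rho_o V E + k"
    using C B BV fin by (subst card_Un_disjoint) (auto intro: finite_subset)
  also have "int (rho_o V E + k) = \<lfloor>(2 * real (rho_o V E) + real (min_degree V E) - 3) / 2\<rfloor>"
  proof -
    have "2 * real (rho_o V E) + real (min_degree V E) - 3 = real (2 * rho_o V E + (\<delta> - 3))"
      using d3 unfolding \<delta>_def by auto
    hence "\<lfloor>(2 * real (rho_o V E) + real (min_degree V E) - 3) / 2\<rfloor>
        = \<lfloor>real (2 * rho_o V E + (\<delta> - 3)) / real (2::nat)\<rfloor>" by (metis of_nat_numeral)
    also have "\<dots> = int ((2 * rho_o V E + (\<delta> - 3)) div 2)" by (rule floor_divide_of_nat_eq)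
    also have "(2 * rho_o V E + (\<delta> - 3)) div 2 = rho_o V E + k" unfolding k_def by simp
    finally show ?thesis by simp
  qed
  finally show ?thesis .
qed

definition K4V :: "nat set" where "K4V = {0,1,2,3}"
definition K4E :: "nat \<Rightarrow> nat \<Rightarrow> bool" where "K4E u v = (u \<noteq> v \<and> u < 4 \<and> v < 4)"

lemma K4V_eq: "K4V = {..<4}" unfolding K4V_def by auto

lemma K4_nb: "v \<in> K4V \<Longrightarrow> nbhd K4V K4E v = K4V - {v}"
  unfolding nbhd_def K4E_def K4V_eq by auto

lemma K4_graph: "simple_graph K4V K4E"
  unfolding simple_graph_def K4E_def K4V_eq by auto

lemma K4_deg: "min_degree K4V K4E = 3"
proof -
  have c: "card (nbhd K4V K4E v) = 3" if "v \<in> K4V" for v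
  proof -
    have "card K4V = 4" by (simp add: K4V_eq)
    moreover have "finite K4V" by (simp add: K4V_eq)
    ultimately show ?thesis using that by (simp add: K4_nb[OF that] card_Diff_singleton)
  qed
  have "(\<lambda>v. card (nbhd K4V K4E v)) ` K4V = {3}"
  proof
    show "(\<lambda>v. card (nbhd K4V K4E v)) ` K4V \<subseteq> {3}" using c by blast
    have "(0::nat) \<in> K4V" by (simp add: K4V_def)
    thus "{3} \<subseteq> (\<lambda>v. card (nbhd K4V K4E v)) ` K4V" using c by force
  qed
  thus ?thesis unfolding min_degree_def by simp
qed

lemma K4_rho: "rho_o K4V K4E = 1"
  unfolding rho_o_def
proof (rule Max_eqI)
  show "finite {card B |B. open_packing K4V K4E B}"
    by (rule packing_set_finite) (simp add: K4V_def)
  show "1 \<in> {card B |B. open_packing K4V K4E B}"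
    by (rule CollectI, rule exI[of _ "{0}"]) (auto simp: open_packing_def K4V_def)
next
  fix y assume "y \<in> {card B |B. open_packing K4V K4E B}"
  then obtain B where B: "open_packing K4V K4E B" "y = card B" by auto
  have "\<forall>u\<in>B. \<forall>w\<in>B. u = w"
  proof (intro ballI, rule ccontr)
    fix u w assume u: "u \<in> B" and w: "w \<in> B" and "u \<noteq> w"
    hence e: "nbhd K4V K4E u \<inter> nbhd K4V K4E w = {}" using B unfolding open_packing_def by auto
    have uv: "u \<in> K4V" "w \<in> K4V" using u w B(1) unfolding open_packing_def by auto
    hence "K4V - {u, w} = {}" using e K4_nb by auto
    moreover have "card (K4V - {u,w}) = 2" using uv \<open>u \<noteq> w\<close>
      by (simp add: K4V_def card_Diff_subset) 
    ultimately show False by (metis card.empty zero_neq_numeral)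
  qed
  moreover have "finite B" using B(1) unfolding open_packing_def K4V_eq by (auto intro: finite_subset)
  ultimately show "y \<le> 1" using B(2) card_le_Suc0_iff_eq by (metis One_nat_def)
qed

lemma K4_gamma: "gamma_st K4V K4E = 2"
  unfolding gamma_st_def
proof (rule Min_eqI)
  show "finite {(\<Sum>v\<in>K4V. f v) | f. is_stdf K4V K4E f}"
    by (rule stdf_set_finite) (simp add: K4V_def)
next
  fix y assume "y \<in> {(\<Sum>v\<in>K4V. f v) | f. is_stdf K4V K4E f}"
  then obtain f where y: "y = (\<Sum>v\<in>K4V. f v)" and f: "is_stdf K4V K4E f" by auto
  have "\<forall>v\<in>K4V. (\<Sum>u\<in>K4V - {v}. f u) \<ge> 1" using f K4_nb unfolding is_stdf_def by auto
  hence "\<forall>v\<in>K4V. y - f v \<ge> 1" using y by (simp add: sum_diff1 K4V_def)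
  hence "y - f 0 \<ge> 1" "y - f 1 \<ge> 1" "y - f 2 \<ge> 1" "y - f 3 \<ge> 1" by (auto simp: K4V_def)
  moreover have "y = f 0 + f 1 + f 2 + f 3" using y by (simp add: K4V_def)
  ultimately show "2 \<le> y" by linarith
next
  let ?f = "\<lambda>v::nat. if v = 0 then -1 else (1::int)"
  have "is_stdf K4V K4E ?f"
    unfolding is_stdf_def
  proof (intro conjI ballI)
    fix v assume v: "v \<in> K4V"
    show "?f v \<in> {-1,1}" by simp
    have "v = 0 \<or> v = 1 \<or> v = 2 \<or> v = 3" using v by (auto simp: K4V_def)
    thus "(\<Sum>u\<in>nbhd K4V K4E v. ?f u) \<ge> 1" using K4_nb[OF v]
      by (elim disjE) (simp_all add: K4V_def insert_Diff_if)
  qed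
  moreover have "(\<Sum>v\<in>K4V. ?f v) = 2" by (simp add: K4V_def)
  ultimately show "2 \<in> {(\<Sum>v\<in>K4V. f v) | f. is_stdf K4V K4E f}" by force
qed

theorem theorem2p1:
  shows "(\<forall>(V :: 'a set) E. simple_graph V E \<and> V \<noteq> {} \<and> min_degree V E \<ge> 3
            \<longrightarrow> gamma_st V E \<le> int (card V)
                 - 2 * \<lfloor>(2 * real (rho_o V E) + real (min_degree V E) - 3) / 2\<rfloor>)
       \<and> (\<exists>(V :: nat set) E. simple_graph V E \<and> V \<noteq> {} \<and> min_degree V E \<ge> 3
            \<and> gamma_st V E = int (card V)
                 - 2 * \<lfloor>(2 * real (rho_o V E) + real (min_degree V E) - 3) / 2\<rfloor>)"
proof
  show "\<forall>(V :: 'a set) E. simple_graph V E \<and> V \<noteq> {} \<and> min_degree V E \<ge> 3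
            \<longrightarrow> gamma_st V E \<le> int (card V)
                 - 2 * \<lfloor>(2 * real (rho_o V E) + real (min_degree V E) - 3) / 2\<rfloor>"
    using upper by blast
  show "\<exists>(V :: nat set) E. simple_graph V E \<and> V \<noteq> {} \<and> min_degree V E \<ge> 3
            \<and> gamma_st V E = int (card V)
                 - 2 * \<lfloor>(2 * real (rho_o V E) + real (min_degree V E) - 3) / 2\<rfloor>"
    by (rule exI[of _ K4V], rule exI[of _ K4E])
      (simp add: K4_graph K4_deg K4_rho K4_gamma, simp add: K4V_def)
qed

end
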